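(* Let $\phi:\mathbb{R}_+\to\mathbb{R}_+$ be a non-negative continuous function and $d\nu(r)=\phi(r)\,dr$ the corresponding Borel measure on $\mathbb{R}_+$. Let $I,J,K,L$ be non-negative functions on $\mathbb{R}_+$ such that: (i) for all $a,b\ge0$, $I(ab)\le bJ(a)+K(aL(b))$; (ii) $J$ is a lower isoperimetric function for $\nu$; (iii) $K$ is non-decreasing and concave; (iv) $L$ is concave. Then for every non-negative continuously differentiable function $f$ on $\mathbb{R}_+$ with bounded support, $$I\Big(\int_{\mathbb{R}_+}f\,d\nu\Big)\le K\Big(\int_{\mathbb{R}_+}L(f)\,d\nu\Big)+\int_{\mathbb{R}_+}|f'|\,d\nu.$$
   Context: $\mathbb{R}_+=[0,\infty)$ with the metric $|x-y|$. For a Borel set $A\subset\mathbb{R}_+$, $\nu^+(A)=\liminf_{r\to0^+}\frac{\nu(A^r)-\nu(A)}{r}$, where $A^r=\{x\in\mathbb{R}_+:\operatorname{dist}(x,A)<r\}$. A function $J$ is a lower isoperimetric function for $\nu$ if $\nu^+(A)\ge J(\nu(A))$ for every Borel set $A\subset\mathbb{R}_+$. *)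

theory Defs
  imports "HOL-Analysis.Analysis" "HOL-Probability.Probability"
begin

definition nu_meas :: "(real \<Rightarrow> real) \<Rightarrow> real measure" where
  "nu_meas phi = density (restrict_space lborel {0..}) (\<lambda>x. ennreal (phi x))"

definition r_nbhd :: "real set \<Rightarrow> real \<Rightarrow> real set" where
  "r_nbhd A r = {x. 0 \<le> x \<and> (\<exists>a\<in>A. \<bar>x - a\<bar> < r)}"

definition nu_plus :: "real measure \<Rightarrow> real set \<Rightarrow> ennreal" where
  "nu_plus M A = Liminf (at_right (0::real))
      (\<lambda>r. (emeasure M (r_nbhd A r) - emeasure M A) / ennreal r)"

definition lower_isoperimetric :: "real measure \<Rightarrow> (real \<Rightarrow> real) \<Rightarrow> bool" where
  "lower_isoperimetric M J \<longleftrightarrow>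
     (\<forall>A \<in> sets borel. A \<subseteq> {0..} \<longrightarrow> emeasure M A < \<infinity> \<longrightarrow>
        ennreal (J (enn2real (emeasure M A))) \<le> nu_plus M A)"

text \<open>Extension of K to [0,inf]: K(inf) = sup of K over R_+ (limit, K non-decreasing).\<close>
definition K_ext :: "(real \<Rightarrow> real) \<Rightarrow> ennreal \<Rightarrow> ereal" where
  "K_ext K x = (if x = \<infinity> then (SUP t\<in>{0::real..}. ereal (K t)) else ereal (K (enn2real x)))"

end

theory Submission
  imports Defs
begin



lemma conc3:
  fixes K :: "real \<Rightarrow> real"
  assumes K: "concave_on {0..} K" and y: "0 \<le> y" "y < v" "v < z"
  shows "(K z - K v) * (v - y) \<le> (K v - K y) * (z - v)"
proof -
  define t where "t = (v - y) / (z - y)"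
  have zy: "z - y > 0" using y by simp
  have tz: "t * (z - y) = v - y" using zy by (simp add: t_def)
  have t: "0 \<le> t" "t \<le> 1" using y by (auto simp: t_def)
  have v: "(1 - t) *\<^sub>R y + t *\<^sub>R z = v" using tz by (simp add: algebra_simps)
  have "K ((1 - t) *\<^sub>R y + t *\<^sub>R z) \<ge> (1 - t) * K y + t * K z"
    by (rule concave_onD[OF K t]) (use y in auto)
  then have "K v \<ge> (1 - t) * K y + t * K z" using v by simp
  then have "(z - y) * K v \<ge> (z - y) * ((1 - t) * K y + t * K z)"
    using zy by (intro mult_left_mono) auto
  also have "(z - y) * ((1 - t) * K y + t * K z) = (z - y) * K y - (t * (z - y)) * K y + (t * (z - y)) * K z"
    by (simp add: algebra_simps)
  also have "\<dots> = (z - v) * K y + (v - y) * K z"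
    unfolding tz by (simp add: algebra_simps)
  finally show ?thesis by (simp add: algebra_simps)
qed

lemma concave_nonneg_mono:
  fixes L :: "real \<Rightarrow> real"
  assumes L: "concave_on {0..} L" and pos: "\<forall>x\<ge>0. L x \<ge> 0" and ab: "0 \<le> a" "a \<le> b"
  shows "L a \<le> L b"
proof (rule ccontr)
  assume c: "\<not> L a \<le> L b"
  then have ab': "a < b" using ab by (cases "a = b") auto
  have q: "L a - L b > 0" using c by simp
  have Lb: "L b \<ge> 0" using pos ab by auto
  define z where "z = b + (L b + 1) * (b - a) / (L a - L b)"
  have pz: "(L b + 1) * (b - a) / (L a - L b) > 0"
    using q Lb ab' by (intro divide_pos_pos mult_pos_pos) auto
  have zb: "z - b = (L b + 1) * (b - a) / (L a - L b)" by (simp add: z_def)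
  have "z > b" using pz zb by simp
  have "(L z - L b) * (b - a) \<le> (L b - L a) * (z - b)"
    by (rule conc3[OF L ab(1) ab' \<open>z > b\<close>])
  also have "(L b - L a) * (z - b) = - ((L a - L b) * ((L b + 1) * (b - a) / (L a - L b)))"
    unfolding zb by (metis minus_diff_eq mult_minus_left)
  also have "\<dots> = - ((L b + 1) * (b - a))" using q by simp
  finally have "(L z - L b) * (b - a) \<le> (- (L b + 1)) * (b - a)" by (simp only: mult_minus_left)
  then have "L z - L b \<le> - (L b + 1)" using ab' by (simp add: mult_le_cancel_right)
  then have "L z < 0" by simp
  moreover have "L z \<ge> 0" using pos \<open>z > b\<close> ab by auto
  ultimately show False by simp
qed

lemma concave_support:
  fixes K :: "real \<Rightarrow> real"
  assumes K: "concave_on {0..} K" and mono: "\<And>a b. 0 \<le> a \<Longrightarrow> a \<le> b \<Longrightarrow> K a \<le> K b"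
    and v: "v > 0"
  shows "\<exists>d\<ge>0. \<forall>y\<ge>0. K y \<le> K v + d * (y - v)"
proof -
  define S where "S = (\<lambda>y. (K v - K y) / (v - y)) ` {0..<v}"
  have ne: "S \<noteq> {}" using v by (auto simp: S_def)
  have right: "(K z - K v) / (z - v) \<le> s" if "s \<in> S" "z > v" for s z
  proof -
    obtain y where y: "0 \<le> y" "y < v" "s = (K v - K y) / (v - y)" using \<open>s \<in> S\<close> by (auto simp: S_def)
    have "(K z - K v) * (v - y) \<le> (K v - K y) * (z - v)" by (rule conc3[OF K y(1,2) that(2)])
    then have "(K z - K v) * (v - y) / ((z - v) * (v - y)) \<le> (K v - K y) * (z - v) / ((z - v) * (v - y))"
      using y that by (intro divide_right_mono) auto
    then show ?thesis using y that by simp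
  qed
  have bdd: "bdd_below S" using right[of _ "v+1"] by (auto simp: bdd_below_def)
  define d where "d = Inf S"
  have d0: "d \<ge> 0" unfolding d_def
  proof (rule cInf_greatest[OF ne])
    fix s assume "s \<in> S"
    then obtain y where y: "0 \<le> y" "y < v" "s = (K v - K y) / (v - y)" by (auto simp: S_def)
    then show "0 \<le> s" using mono[of y v] by simp
  qed
  have "K y \<le> K v + d * (y - v)" if "y \<ge> 0" for y
  proof (cases y v rule: linorder_cases)
    case less
    have "d \<le> (K v - K y) / (v - y)" unfolding d_def
      by (rule cInf_lower[OF _ bdd]) (use less that in \<open>auto simp: S_def\<close>)
    then have "d * (v - y) \<le> K v - K y" using less by (simp add: le_divide_eq)
    then show ?thesis by (simp add: algebra_simps)
  next
    case equal then show ?thesis by simp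
  next
    case greater
    have "(K y - K v) / (y - v) \<le> d" unfolding d_def
      by (rule cInf_greatest[OF ne]) (rule right[OF _ greater])
    then have "K y - K v \<le> d * (y - v)" using greater by (simp add: divide_le_eq)
    then show ?thesis by simp
  qed
  then show ?thesis using d0 by blast
qed



lemma N_space[simp]: "space (nu_meas phi) = {0..}"
  by (simp add: nu_meas_def space_restrict_space)

lemma N_sets: "sets (nu_meas phi) = sets (restrict_space borel {0..})"
  by (simp add: nu_meas_def sets_restrict_space_cong[OF sets_lborel])

lemma N_sets_iff: "A \<in> sets (nu_meas phi) \<longleftrightarrow> A \<in> sets borel \<and> A \<subseteq> {0..}"
  unfolding N_sets by (subst sets_restrict_space_iff) auto

lemma N_meas_iff: "g \<in> borel_measurable (nu_meas phi) \<longleftrightarrow> g \<in> borel_measurable (restrict_space borel {0..})"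
  using measurable_cong_sets[OF N_sets[of phi] refl] by blast

lemma N_meas_borel: "g \<in> borel_measurable borel \<Longrightarrow> g \<in> borel_measurable (nu_meas phi)"
  unfolding N_meas_iff by (rule measurable_restrict_space1)

lemma N_meas_cont: "continuous_on {0..} g \<Longrightarrow> g \<in> borel_measurable (nu_meas phi)"
  unfolding N_meas_iff by (rule borel_measurable_continuous_on_restrict) 

context
  fixes phi :: "real \<Rightarrow> real"
  assumes phi_nonneg: "\<forall>x\<ge>0. phi x \<ge> 0"
    and phi_cont: "continuous_on {0..} phi"
begin

lemma phi_meas: "(\<lambda>x. ennreal (phi x)) \<in> borel_measurable (restrict_space lborel {0..})"
proof -
  have "phi \<in> borel_measurable (restrict_space borel {0..})"
    by (rule borel_measurable_continuous_on_restrict[OF phi_cont])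
  then have "phi \<in> borel_measurable (restrict_space lborel {0..})"
    using measurable_cong_sets[OF sets_restrict_space_cong[OF sets_lborel] refl] by simp
  then show ?thesis by measurable
qed

lemma N_nn_integral:
  assumes "g \<in> borel_measurable (nu_meas phi)"
  shows "integral\<^sup>N (nu_meas phi) g = (\<integral>\<^sup>+ x. ennreal (phi x) * g x * indicator {0..} x \<partial>lborel)"
proof -
  have g: "g \<in> borel_measurable (restrict_space lborel {0..})"
    using assms unfolding N_meas_iff 
    using measurable_cong_sets[OF sets_restrict_space_cong[OF sets_lborel] refl] by simp
  have "integral\<^sup>N (nu_meas phi) g = (\<integral>\<^sup>+ x. ennreal (phi x) * g x \<partial>restrict_space lborel {0..})"
    unfolding nu_meas_def by (rule nn_integral_density[OF phi_meas g])
  also have "\<dots> = (\<integral>\<^sup>+ x. ennreal (phi x) * g x * indicator {0..} x \<partial>lborel)"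
    by (rule nn_integral_restrict_space) auto
  finally show ?thesis .
qed

lemma N_sigma_finite: "sigma_finite_measure (nu_meas phi)"
proof -
  interpret S: sigma_finite_measure "restrict_space lborel {0::real..}"
    by (rule sigma_finite_measure_restrict_space) (auto simp: lborel.sigma_finite_measure_axioms intro!: borel_closed closed_atLeast)
  show ?thesis unfolding nu_meas_def
    by (subst S.sigma_finite_iff_density_finite[OF phi_meas]) auto
qed

lemma N_emeasure_bounded:
  assumes "A \<subseteq> {0..b}"
  shows "emeasure (nu_meas phi) A < \<infinity>"
proof -
  obtain C where C0: "\<And>x. x \<in> {0..b} \<Longrightarrow> norm (phi x) \<le> C"
    using compact_imp_bounded[OF compact_continuous_image[OF continuous_on_subset[OF phi_cont] compact_Icc, of 0 b]]
    unfolding bounded_iff by fastforce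
  have C: "phi x \<le> C" if "x \<in> {0..b}" for x using C0[OF that] by simp
  have "emeasure (nu_meas phi) A \<le> emeasure (nu_meas phi) {0..b}"
    by (rule emeasure_mono) (use assms in \<open>auto simp: N_sets_iff\<close>)
  also have "\<dots> = integral\<^sup>N (nu_meas phi) (indicator {0..b})"
    by (subst nn_integral_indicator) (auto simp: N_sets_iff)
  also have "\<dots> = (\<integral>\<^sup>+ x. ennreal (phi x) * indicator {0..b} x * indicator {0..} x \<partial>lborel)"
    by (rule N_nn_integral) (rule N_meas_borel, simp)
  also have "\<dots> \<le> (\<integral>\<^sup>+ x. ennreal C * indicator {0..b} x \<partial>lborel)"
    by (intro nn_integral_mono) (auto simp: indicator_def intro!: ennreal_leI C)
  also have "\<dots> < \<infinity>" by (cases "0 \<le> b") (simp_all add: nn_integral_cmult_indicator ennreal_mult_less_top)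
  finally show ?thesis .
qed

lemma layer_cake:
  assumes g[measurable]: "g \<in> borel_measurable (nu_meas phi)" and gpos: "\<forall>x\<ge>0. g x \<ge> 0"
  shows "(\<integral>\<^sup>+ y. ennreal (g y) \<partial>nu_meas phi)
       = (\<integral>\<^sup>+ s. emeasure (nu_meas phi) {y\<in>{0..}. s < g y} * indicator {0..} s \<partial>lborel)"
proof -
  interpret N: sigma_finite_measure "nu_meas phi" by (rule N_sigma_finite)
  interpret P: pair_sigma_finite "nu_meas phi" lborel
    by unfold_locales
  define F where "F = (\<lambda>y s::real. indicator {p::real\<times>real. 0 \<le> snd p \<and> snd p < g (fst p)} (y, s) :: ennreal)"
  have Fm: "case_prod F \<in> borel_measurable (nu_meas phi \<Otimes>\<^sub>M lborel)"
  proof -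
    have "{p::real\<times>real. 0 \<le> snd p \<and> snd p < g (fst p)} \<inter> space (nu_meas phi \<Otimes>\<^sub>M lborel) \<in> sets (nu_meas phi \<Otimes>\<^sub>M lborel)"
    proof -
      have "{p \<in> space (nu_meas phi \<Otimes>\<^sub>M lborel). 0 \<le> snd p \<and> snd p < g (fst p)} \<in> sets (nu_meas phi \<Otimes>\<^sub>M lborel)"
        by measurable
      then show ?thesis by (simp add: Int_def conj_commute)
    qed
    then show ?thesis unfolding F_def by (simp add: case_prod_beta' borel_measurable_indicator')
  qed
  have "(\<integral>\<^sup>+ y. ennreal (g y) \<partial>nu_meas phi) = (\<integral>\<^sup>+ y. (\<integral>\<^sup>+ s. F y s \<partial>lborel) \<partial>nu_meas phi)"
  proof (rule nn_integral_cong)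
    fix y assume "y \<in> space (nu_meas phi)"
    then have y: "g y \<ge> 0" using gpos by auto
    have "(\<integral>\<^sup>+ s. F y s \<partial>lborel) = (\<integral>\<^sup>+ s. indicator {0..<g y} s \<partial>lborel)"
      by (rule nn_integral_cong) (auto simp: F_def indicator_def)
    also have "\<dots> = ennreal (g y)" using y by simp
    finally show "ennreal (g y) = (\<integral>\<^sup>+ s. F y s \<partial>lborel)" by simp
  qed
  also have "\<dots> = (\<integral>\<^sup>+ s. (\<integral>\<^sup>+ y. F y s \<partial>nu_meas phi) \<partial>lborel)"
    by (rule P.Fubini'[OF Fm, symmetric])
  also have "\<dots> = (\<integral>\<^sup>+ s. emeasure (nu_meas phi) {y\<in>{0..}. s < g y} * indicator {0..} s \<partial>lborel)"
  proof (rule nn_integral_cong)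
    fix s :: real
    have "{y\<in>{0..}. s < g y} = {y \<in> space (nu_meas phi). s < g y}" by simp
    also have "\<dots> \<in> sets (nu_meas phi)" by measurable
    finally have S: "{y\<in>{0..}. s < g y} \<in> sets (nu_meas phi)" .
    have "(\<integral>\<^sup>+ y. F y s \<partial>nu_meas phi) = (\<integral>\<^sup>+ y. indicator {0..} s * indicator {y\<in>{0..}. s < g y} y \<partial>nu_meas phi)"
      by (rule nn_integral_cong) (auto simp: F_def indicator_def)
    also have "\<dots> = indicator {0..} s * emeasure (nu_meas phi) {y\<in>{0..}. s < g y}"
      using S by (simp add: nn_integral_cmult)
    finally show "(\<integral>\<^sup>+ y. F y s \<partial>nu_meas phi) = emeasure (nu_meas phi) {y\<in>{0..}. s < g y} * indicator {0..} s"
      by (simp add: mult.commute)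
  qed
  finally show ?thesis .
qed

end




lemma Liminf_filter_mono:
  fixes f :: "'a \<Rightarrow> 'b::complete_lattice"
  assumes "G \<le> F" shows "Liminf F f \<le> Liminf G f"
  unfolding Liminf_def
  by (rule SUP_subset_mono) (use assms in \<open>auto simp: le_filter_def\<close>)

lemma antitone_ennreal_meas:
  fixes g :: "real \<Rightarrow> ennreal"
  assumes mono: "\<And>s t. s \<le> t \<Longrightarrow> g t \<le> g s" and fin: "\<And>s. g s < \<infinity>"
  shows "g \<in> borel_measurable borel"
proof -
  have m: "mono (\<lambda>s. - enn2real (g s))"
    using fin by (auto simp: mono_def intro!: enn2real_mono mono)
  have "(\<lambda>s. - enn2real (g s)) \<in> borel_measurable borel" by (rule borel_measurable_mono[OF m])
  then have "(\<lambda>s. ennreal (- (- enn2real (g s)))) \<in> borel_measurable borel" by measurable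
  moreover have "(\<lambda>s. ennreal (- (- enn2real (g s)))) = g"
    using fin by (auto simp: fun_eq_iff less_top)
  ultimately show ?thesis by (simp only:)
qed

lemma concave_meas:
  fixes L :: "real \<Rightarrow> real"
  assumes L: "concave_on {0..} L" and h: "h \<in> borel_measurable M" and hpos: "\<And>x. x \<in> space M \<Longrightarrow> h x \<ge> 0"
  shows "(\<lambda>x. L (h x)) \<in> borel_measurable M"
proof -
  have "convex_on {0<..} (\<lambda>x. - L x)"
    using L unfolding concave_on_def by (rule convex_on_subset) auto
  then have "continuous_on {0<..} (\<lambda>x. - L x)" by (intro convex_on_continuous) auto
  then have c: "continuous_on {0<..} L" using continuous_on_minus by fastforce
  define L2 where "L2 = (\<lambda>y. if y \<in> {0::real<..} then L y else L 0)"
  have "L2 \<in> borel_measurable borel" unfolding L2_def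
    by (rule borel_measurable_continuous_on_if) (auto intro: c continuous_on_const)
  then have "(\<lambda>x. L2 (h x)) \<in> borel_measurable M" using h by measurable
  moreover have "\<And>x. x \<in> space M \<Longrightarrow> L2 (h x) = L (h x)"
    using hpos by (force simp: L2_def)
  ultimately show ?thesis by (simp cong: measurable_cong)
qed

locale fsetup =
  fixes phi f f' :: "real \<Rightarrow> real" and R :: real
  assumes phi_nonneg: "\<forall>x\<ge>0. phi x \<ge> 0" and phi_cont: "continuous_on {0..} phi"
    and f_nonneg: "\<forall>x\<ge>0. f x \<ge> 0"
    and f_deriv: "\<forall>x\<ge>0. (f has_real_derivative f' x) (at x within {0..})"
    and f'_cont: "continuous_on {0..} f'"
    and R: "R > 0" and fR: "\<forall>x\<ge>R. f x = 0"
begin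

lemma f_cont: "continuous_on {0..} f"
  unfolding continuous_on_eq_continuous_within using f_deriv DERIV_continuous by blast

lemma f'_zero: assumes "x > R" shows "f' x = 0"
proof -
  have int: "x \<in> interior {0::real..}" using R assms by simp
  have d: "(f has_real_derivative f' x) (at x)"
  proof -
    have "(f has_real_derivative f' x) (at x within {0..})" using f_deriv R assms by simp
    then show ?thesis using at_within_interior[OF int] by simp
  qed
  have "((\<lambda>_. 0) has_real_derivative f' x) (at x)"
    by (rule has_field_derivative_transform_within_open[OF d, of "{R<..}"]) (use fR assms in auto)
  then show ?thesis using DERIV_unique DERIV_const by blast
qed

lemma f_bound:
  assumes e: "e > 0"
  shows "\<exists>\<delta>>0. \<delta> \<le> 1 \<and> (\<forall>x a. 0 \<le> x \<longrightarrow> 0 \<le> a \<longrightarrow> \<bar>a - x\<bar> < \<delta> \<longrightarrow> f a \<le> f x + \<bar>a - x\<bar> * (\<bar>f' x\<bar> + e))"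
proof -
  have "uniformly_continuous_on {0..R+2} f'"
    by (rule compact_uniformly_continuous) (auto intro: continuous_on_subset[OF f'_cont])
  then obtain d where d: "d > 0" "\<And>x x'. x \<in> {0..R+2} \<Longrightarrow> x' \<in> {0..R+2} \<Longrightarrow> dist x' x < d \<Longrightarrow> dist (f' x') (f' x) < e"
    unfolding uniformly_continuous_on_def using e by metis
  define \<delta> where "\<delta> = min d 1"
  have "f a \<le> f x + \<bar>a - x\<bar> * (\<bar>f' x\<bar> + e)" if xa: "0 \<le> x" "0 \<le> a" "\<bar>a - x\<bar> < \<delta>" for x a
  proof (cases "x > R + 1")
    case True
    then have "a \<ge> R" using xa by (auto simp: \<delta>_def)
    then have "f a = 0" using fR by auto
    moreover have "0 \<le> f x + \<bar>a - x\<bar> * (\<bar>f' x\<bar> + e)" using f_nonneg xa e by (auto intro!: add_nonneg_nonneg)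
    ultimately show ?thesis by simp
  next
    case False
    define S where "S = {min x a..max x a}"
    have SS: "S \<subseteq> {0..}" using xa by (auto simp: S_def)
    have df: "(f has_field_derivative f' z) (at z within S)" if "z \<in> S" for z
      using f_deriv SS that by (auto intro: DERIV_subset)
    have bnd: "norm (f' z) \<le> \<bar>f' x\<bar> + e" if "z \<in> S" for z
    proof -
      have z: "z \<in> {0..R+2}" "x \<in> {0..R+2}" using that False xa by (auto simp: S_def \<delta>_def)
      have "dist z x < d" using that xa by (auto simp: S_def \<delta>_def dist_real_def)
      then have "dist (f' z) (f' x) < e" using d z by blast
      then show ?thesis by (auto simp: dist_real_def)
    qed
    have "norm (f a - f x) \<le> (\<bar>f' x\<bar> + e) * norm (a - x)"
      by (rule field_differentiable_bound[OF _ df bnd]) (auto simp: S_def)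
    then show ?thesis by (auto simp: algebra_simps)
  qed
  moreover have "\<delta> > 0" "\<delta> \<le> 1" using d by (auto simp: \<delta>_def)
  ultimately show ?thesis by blast
qed

lemma f_meas: "f \<in> borel_measurable (nu_meas phi)" by (rule N_meas_cont[OF f_cont])
lemma f'_meas: "f' \<in> borel_measurable (nu_meas phi)" by (rule N_meas_cont[OF f'_cont])

lemma level_sets: "{y\<in>{0..}. s < f y} \<in> sets (nu_meas phi)"
proof -
  have "{y \<in> space (nu_meas phi). s < f y} \<in> sets (nu_meas phi)" using f_meas by measurable
  then show ?thesis by simp
qed

lemma level_sub: assumes "s \<ge> 0" shows "{y\<in>{0..}. s < f y} \<subseteq> {0..R}"
proof
  fix y assume y: "y \<in> {y\<in>{0..}. s < f y}"
  have "y < R"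
  proof (rule ccontr)
    assume "\<not> y < R" then have "f y = 0" using fR by auto
    then show False using y assms by simp
  qed
  then show "y \<in> {0..R}" using y by auto
qed

lemma nbhd_sets: "r_nbhd A r \<in> sets (nu_meas phi)"
proof -
  have "r_nbhd A r = {0..} \<inter> (\<Union>a\<in>A. ball a r)"
    by (auto simp: r_nbhd_def dist_real_def abs_minus_commute)
  also have "\<dots> \<in> sets borel" by (intro sets.Int borel_closed borel_open) auto
  finally show ?thesis by (auto simp: N_sets_iff r_nbhd_def)
qed

lemma nbhd_sub: "s \<ge> 0 \<Longrightarrow> r \<le> 1 \<Longrightarrow> r_nbhd {y\<in>{0..}. s < f y} r \<subseteq> {0..R+1}"
proof
  fix x assume s: "s \<ge> 0" "r \<le> 1" and x: "x \<in> r_nbhd {y\<in>{0..}. s < f y} r"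
  then obtain a where a: "a \<ge> 0" "s < f a" "\<bar>x - a\<bar> < r" "x \<ge> 0" by (auto simp: r_nbhd_def)
  then have "a < R" using fR s by (force simp: not_le[symmetric])
  then show "x \<in> {0..R+1}" using a s by auto
qed

lemma fin_int_f: "(\<integral>\<^sup>+ y. ennreal (f y) \<partial>nu_meas phi) < \<infinity>"
proof -
  obtain M where M: "\<And>x. x \<in> {0..R} \<Longrightarrow> norm (f x) \<le> M"
    using compact_imp_bounded[OF compact_continuous_image[OF continuous_on_subset[OF f_cont] compact_Icc, of 0 R]]
    unfolding bounded_iff by fastforce
  have "(\<integral>\<^sup>+ y. ennreal (f y) \<partial>nu_meas phi) \<le> (\<integral>\<^sup>+ y. ennreal M * indicator {0..R} y \<partial>nu_meas phi)"
  proof (rule nn_integral_mono)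
    fix y assume "y \<in> space (nu_meas phi)"
    then have y: "y \<ge> 0" by simp
    show "ennreal (f y) \<le> ennreal M * indicator {0..R} y"
    proof (cases "y \<le> R")
      case True then show ?thesis using M[of y] y by (auto intro!: ennreal_leI)
    next
      case False then show ?thesis using fR by auto
    qed
  qed
  also have "\<dots> = ennreal M * emeasure (nu_meas phi) {0..R}"
    by (rule nn_integral_cmult_indicator) (simp add: N_sets_iff)
  also have "\<dots> < \<infinity>" using N_emeasure_bounded[OF phi_nonneg phi_cont, of "{0..R}" R]
    by (simp add: ennreal_mult_less_top)
  finally show ?thesis .
qed

lemma nbhd_integral_bound:
  assumes e: "e > 0" and r: "r > 0" "r \<le> 1"
    and hd: "\<forall>x a. 0 \<le> x \<longrightarrow> 0 \<le> a \<longrightarrow> \<bar>a - x\<bar> < r \<longrightarrow> f a \<le> f x + \<bar>a - x\<bar> * (\<bar>f' x\<bar> + e)"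
  shows "(\<integral>\<^sup>+ s. (emeasure (nu_meas phi) (r_nbhd {y\<in>{0..}. s < f y} r) - emeasure (nu_meas phi) {y\<in>{0..}. s < f y}) / ennreal r * indicator {0..} s \<partial>lborel)
     \<le> (\<integral>\<^sup>+ x. ennreal \<bar>f' x\<bar> \<partial>nu_meas phi) + ennreal e * emeasure (nu_meas phi) {0..R+1}"
proof -
  let ?N = "nu_meas phi"
  define g where "g = (\<lambda>y. (f y + r * (\<bar>f' y\<bar> + e)) * indicator {0..R+1} y)"
  have [measurable]: "{0..R+1} \<in> sets ?N" by (simp add: N_sets_iff)
  have [measurable]: "f \<in> borel_measurable ?N" "f' \<in> borel_measurable ?N" using f_meas f'_meas by auto
  have gm: "g \<in> borel_measurable ?N" unfolding g_def by measurable
  have gpos: "\<forall>x\<ge>0. g x \<ge> 0" using f_nonneg e r by (auto simp: g_def indicator_def intro!: add_nonneg_nonneg)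
  define G where "G = (\<lambda>s. emeasure ?N {y\<in>{0..}. s < g y})"
  define F where "F = (\<lambda>s. emeasure ?N {y\<in>{0..}. s < f y})"
  have gsets: "{y\<in>{0..}. s < g y} \<in> sets ?N" for s
  proof -
    have "{y \<in> space ?N. s < g y} \<in> sets ?N" using gm by measurable
    then show ?thesis by simp
  qed
  have sub1: "r_nbhd {y\<in>{0..}. s < f y} r \<subseteq> {y\<in>{0..}. s < g y}" if s: "s \<ge> 0" for s
  proof
    fix x assume x: "x \<in> r_nbhd {y\<in>{0..}. s < f y} r"
    have xR: "x \<in> {0..R+1}" using nbhd_sub[OF s r(2)] x by auto
    obtain a where a: "a \<ge> 0" "s < f a" "\<bar>x - a\<bar> < r" "x \<ge> 0" using x by (auto simp: r_nbhd_def)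
    have "f a \<le> f x + \<bar>a - x\<bar> * (\<bar>f' x\<bar> + e)" using hd a by (auto simp: abs_minus_commute)
    also have "\<dots> \<le> f x + r * (\<bar>f' x\<bar> + e)"
      using a e by (intro add_left_mono mult_right_mono) (auto simp: abs_minus_commute)
    finally show "x \<in> {y\<in>{0..}. s < g y}" using a xR by (auto simp: g_def)
  qed
  have sub2: "{y\<in>{0..}. s < f y} \<subseteq> {y\<in>{0..}. s < g y}" if s: "s \<ge> 0" for s
  proof
    fix x assume x: "x \<in> {y\<in>{0..}. s < f y}"
    then have "x \<in> {0..R+1}" using level_sub[OF s] by auto
    moreover have "f x \<le> f x + r * (\<bar>f' x\<bar> + e)" using r e by simp
    ultimately show "x \<in> {y\<in>{0..}. s < g y}" using x by (auto simp: g_def)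
  qed
  have Gfin: "G s < \<infinity>" if "s \<ge> 0" for s
  proof -
    have "{y\<in>{0..}. s < g y} \<subseteq> {0..R+1}" using that by (auto simp: g_def indicator_def split: if_splits)
    then show ?thesis unfolding G_def by (rule N_emeasure_bounded[OF phi_nonneg phi_cont])
  qed
  have Ffin: "F s < \<infinity>" if "s \<ge> 0" for s
    unfolding F_def using level_sub[OF that] by (rule N_emeasure_bounded[OF phi_nonneg phi_cont])
  have Gm: "(\<lambda>s. G (max s 0)) \<in> borel_measurable borel"
  proof (rule antitone_ennreal_meas)
    show "G (max t 0) \<le> G (max s 0)" if "s \<le> t" for s t
      unfolding G_def using that by (intro emeasure_mono gsets) auto
  qed (rule Gfin, simp)
  have Fm: "(\<lambda>s. F (max s 0)) \<in> borel_measurable borel"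
  proof (rule antitone_ennreal_meas)
    show "F (max t 0) \<le> F (max s 0)" if "s \<le> t" for s t
      unfolding F_def using that by (intro emeasure_mono level_sets) auto
  qed (rule Ffin, simp)
  have [measurable]: "{0::real..} \<in> sets borel" by simp
  note Gm[measurable] Fm[measurable]
  have step1: "(\<integral>\<^sup>+ s. (emeasure ?N (r_nbhd {y\<in>{0..}. s < f y} r) - F s) / ennreal r * indicator {0..} s \<partial>lborel)
      \<le> (\<integral>\<^sup>+ s. (G (max s 0) * indicator {0..} s - F (max s 0) * indicator {0..} s) * ennreal (1 / r) \<partial>lborel)"
  proof (rule nn_integral_mono)
    fix s :: real
    show "(emeasure ?N (r_nbhd {y\<in>{0..}. s < f y} r) - F s) / ennreal r * indicator {0..} s
        \<le> (G (max s 0) * indicator {0..} s - F (max s 0) * indicator {0..} s) * ennreal (1 / r)"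
    proof (cases "s \<ge> 0")
      case True
      have "emeasure ?N (r_nbhd {y\<in>{0..}. s < f y} r) \<le> G s"
        unfolding G_def by (intro emeasure_mono sub1 True gsets)
      then have "emeasure ?N (r_nbhd {y\<in>{0..}. s < f y} r) - F s \<le> G s - F s"
        by (rule ennreal_minus_mono) simp
      then show ?thesis using True r
        by (simp add: divide_ennreal_def inverse_ennreal inverse_eq_divide mult_right_mono)
    qed simp
  qed
  also have "\<dots> = (\<integral>\<^sup>+ s. (G (max s 0) * indicator {0..} s - F (max s 0) * indicator {0..} s) \<partial>lborel) * ennreal (1 / r)"
    by (intro nn_integral_multc) measurable
  also have "(\<integral>\<^sup>+ s. (G (max s 0) * indicator {0..} s - F (max s 0) * indicator {0..} s) \<partial>lborel)
      = (\<integral>\<^sup>+ s. G (max s 0) * indicator {0..} s \<partial>lborel) - (\<integral>\<^sup>+ s. F (max s 0) * indicator {0..} s \<partial>lborel)"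
  proof (rule nn_integral_diff)
    show "(\<lambda>s. G (max s 0) * indicator {0..} s) \<in> borel_measurable lborel" by measurable
    show "(\<lambda>s. F (max s 0) * indicator {0..} s) \<in> borel_measurable lborel" by measurable
    have "(\<integral>\<^sup>+ s. F (max s 0) * indicator {0..} s \<partial>lborel) = (\<integral>\<^sup>+ s. F s * indicator {0..} s \<partial>lborel)"
      by (intro nn_integral_cong) (auto simp: indicator_def)
    also have "\<dots> = (\<integral>\<^sup>+ y. ennreal (f y) \<partial>?N)"
      unfolding F_def by (rule layer_cake[OF phi_nonneg phi_cont f_meas f_nonneg, symmetric])
    finally show "(\<integral>\<^sup>+ s. F (max s 0) * indicator {0..} s \<partial>lborel) \<noteq> \<infinity>" using fin_int_f by simp
    show "AE s in lborel. F (max s 0) * indicator {0..} s \<le> G (max s 0) * indicator {0..} s"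
    proof (rule AE_I2)
      fix s :: real
      have "F (max s 0) \<le> G (max s 0)" unfolding F_def G_def by (intro emeasure_mono sub2 gsets) auto
      then show "F (max s 0) * indicator {0..} s \<le> G (max s 0) * indicator {0..} s" by (intro mult_right_mono) auto
    qed
  qed
  also have "(\<integral>\<^sup>+ s. G (max s 0) * indicator {0..} s \<partial>lborel) = (\<integral>\<^sup>+ y. ennreal (g y) \<partial>?N)"
  proof -
    have "(\<integral>\<^sup>+ s. G (max s 0) * indicator {0..} s \<partial>lborel) = (\<integral>\<^sup>+ s. G s * indicator {0..} s \<partial>lborel)"
      by (intro nn_integral_cong) (auto simp: indicator_def)
    also have "\<dots> = (\<integral>\<^sup>+ y. ennreal (g y) \<partial>?N)"
      unfolding G_def by (rule layer_cake[OF phi_nonneg phi_cont gm gpos, symmetric])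
    finally show ?thesis .
  qed
  also have "(\<integral>\<^sup>+ s. F (max s 0) * indicator {0..} s \<partial>lborel) = (\<integral>\<^sup>+ y. ennreal (f y) \<partial>?N)"
  proof -
    have "(\<integral>\<^sup>+ s. F (max s 0) * indicator {0..} s \<partial>lborel) = (\<integral>\<^sup>+ s. F s * indicator {0..} s \<partial>lborel)"
      by (intro nn_integral_cong) (auto simp: indicator_def)
    also have "\<dots> = (\<integral>\<^sup>+ y. ennreal (f y) \<partial>?N)"
      unfolding F_def by (rule layer_cake[OF phi_nonneg phi_cont f_meas f_nonneg, symmetric])
    finally show ?thesis .
  qed
  also have "(\<integral>\<^sup>+ y. ennreal (g y) \<partial>?N) = (\<integral>\<^sup>+ y. ennreal (f y) + ennreal r * (ennreal \<bar>f' y\<bar> * indicator {0..R+1} y + ennreal e * indicator {0..R+1} y) \<partial>?N)"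
  proof (rule nn_integral_cong)
    fix y assume "y \<in> space ?N"
    then have y: "y \<ge> 0" by simp
    show "ennreal (g y) = ennreal (f y) + ennreal r * (ennreal \<bar>f' y\<bar> * indicator {0..R+1} y + ennreal e * indicator {0..R+1} y)"
    proof (cases "y \<le> R + 1")
      case True
      then show ?thesis using y r e f_nonneg
        by (simp add: g_def ennreal_plus[symmetric] ennreal_mult[symmetric] distrib_left del: ennreal_plus)
    next
      case False
      then show ?thesis using fR by (simp add: g_def)
    qed
  qed
  also have "\<dots> = (\<integral>\<^sup>+ y. ennreal (f y) \<partial>?N) + ennreal r * ((\<integral>\<^sup>+ y. ennreal \<bar>f' y\<bar> * indicator {0..R+1} y \<partial>?N) + ennreal e * emeasure ?N {0..R+1})"
    using f_meas f'_meas
    by (simp add: nn_integral_add nn_integral_cmult nn_integral_cmult_indicator N_sets_iff)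
  finally have main: "(\<integral>\<^sup>+ s. (emeasure ?N (r_nbhd {y\<in>{0..}. s < f y} r) - F s) / ennreal r * indicator {0..} s \<partial>lborel)
      \<le> ((\<integral>\<^sup>+ y. ennreal (f y) \<partial>?N) + ennreal r * ((\<integral>\<^sup>+ y. ennreal \<bar>f' y\<bar> * indicator {0..R+1} y \<partial>?N) + ennreal e * emeasure ?N {0..R+1}) - (\<integral>\<^sup>+ y. ennreal (f y) \<partial>?N)) * ennreal (1 / r)" .
  also have "\<dots> = ennreal r * ((\<integral>\<^sup>+ y. ennreal \<bar>f' y\<bar> * indicator {0..R+1} y \<partial>?N) + ennreal e * emeasure ?N {0..R+1}) * ennreal (1 / r)"
    using fin_int_f by (subst ennreal_add_diff_cancel_left) auto
  also have "\<dots> = (\<integral>\<^sup>+ y. ennreal \<bar>f' y\<bar> * indicator {0..R+1} y \<partial>?N) + ennreal e * emeasure ?N {0..R+1}"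
  proof -
    have "ennreal r * ennreal (1 / r) = 1" using r by (simp add: ennreal_mult[symmetric])
    then show ?thesis by (simp only: mult.assoc mult.commute[of "ennreal r"] mult.left_commute[of "ennreal r"]) simp
  qed
  also have "\<dots> \<le> (\<integral>\<^sup>+ x. ennreal \<bar>f' x\<bar> \<partial>?N) + ennreal e * emeasure ?N {0..R+1}"
    by (intro add_right_mono nn_integral_mono) (auto simp: indicator_def)
  finally show ?thesis unfolding F_def .
qed

end




context fsetup begin

lemma boundary_fatou:
  assumes psim: "psi \<in> borel_measurable borel"
    and le: "\<And>s. s \<ge> 0 \<Longrightarrow> psi s \<le> nu_plus (nu_meas phi) {y\<in>{0..}. s < f y}"
  shows "(\<integral>\<^sup>+ s. psi s * indicator {0..} s \<partial>lborel) \<le> (\<integral>\<^sup>+ x. ennreal \<bar>f' x\<bar> \<partial>nu_meas phi)"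
proof -
  let ?N = "nu_meas phi"
  define E where "E s = {y\<in>{0..}. s < f y}" for s
  define H where "H r s = (emeasure ?N (r_nbhd (E s) r) - emeasure ?N (E s)) / ennreal r" for r s
  define rr where "rr n = inverse (real (Suc n))" for n
  define B where "B = (\<integral>\<^sup>+ x. ennreal \<bar>f' x\<bar> \<partial>?N)"
  define C where "C = emeasure ?N {0..R+1}"
  have Cfin: "C < \<infinity>" unfolding C_def by (rule N_emeasure_bounded[OF phi_nonneg phi_cont]) auto
  have rr0: "rr \<longlonglongrightarrow> 0" unfolding rr_def by (rule LIMSEQ_inverse_real_of_nat)
  have rrpos: "rr n > 0" for n by (simp add: rr_def)
  have rr1: "rr n \<le> 1" for n by (simp add: rr_def inverse_le_1_iff)
  have rrlim: "filterlim rr (at_right 0) sequentially"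
    by (rule tendsto_imp_filterlim_at_right[OF rr0]) (simp add: rrpos)
  have pt: "psi s * indicator {0..} s \<le> liminf (\<lambda>n. H (rr n) s * indicator {0..} s)" for s
  proof (cases "s \<ge> 0")
    case True
    have "psi s \<le> Liminf (at_right 0) (\<lambda>r. H r s)"
      using le[OF True] by (simp add: nu_plus_def H_def E_def)
    also have "\<dots> \<le> Liminf (filtermap rr sequentially) (\<lambda>r. H r s)"
      by (rule Liminf_filter_mono) (use rrlim in \<open>simp add: filterlim_def\<close>)
    also have "\<dots> \<le> liminf (\<lambda>n. H (rr n) s)" by (rule Liminf_filtermap_le)
    finally show ?thesis using True by simp
  qed simp
  have Esets: "E s \<in> sets ?N" for s unfolding E_def by (rule level_sets)
  have Emono: "E t \<subseteq> E s" if "s \<le> t" for s t using that by (auto simp: E_def)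
  have meas: "(\<lambda>s. H (rr n) s * indicator {0..} s) \<in> borel_measurable lborel" for n
  proof -
    have m1: "(\<lambda>s. emeasure ?N (r_nbhd (E (max s 0)) (rr n))) \<in> borel_measurable borel"
    proof (rule antitone_ennreal_meas)
      show "emeasure ?N (r_nbhd (E (max t 0)) (rr n)) \<le> emeasure ?N (r_nbhd (E (max s 0)) (rr n))" if "s \<le> t" for s t
      proof -
        have "E (max t 0) \<subseteq> E (max s 0)" by (rule Emono) (use that in auto)
        then have "r_nbhd (E (max t 0)) (rr n) \<subseteq> r_nbhd (E (max s 0)) (rr n)" unfolding r_nbhd_def by blast
        then show ?thesis by (intro emeasure_mono nbhd_sets)
      qed
      show "emeasure ?N (r_nbhd (E (max s 0)) (rr n)) < \<infinity>" for s
        unfolding E_def by (rule N_emeasure_bounded[OF phi_nonneg phi_cont nbhd_sub]) (auto simp: rr1)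
    qed
    have m2: "(\<lambda>s. emeasure ?N (E (max s 0))) \<in> borel_measurable borel"
    proof (rule antitone_ennreal_meas)
      show "emeasure ?N (E (max t 0)) \<le> emeasure ?N (E (max s 0))" if "s \<le> t" for s t
        by (intro emeasure_mono Esets Emono) (use that in auto)
      show "emeasure ?N (E (max s 0)) < \<infinity>" for s
        unfolding E_def by (rule N_emeasure_bounded[OF phi_nonneg phi_cont level_sub]) auto
    qed
    have [measurable]: "{0::real..} \<in> sets borel" by simp
    note m1[measurable] m2[measurable]
    have "(\<lambda>s. H (rr n) (max s 0) * indicator {0..} s) \<in> borel_measurable lborel"
      unfolding H_def by measurable
    moreover have "H (rr n) (max s 0) * indicator {0..} s = H (rr n) s * indicator {0..} s" for s
      by (cases "s \<ge> 0") auto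
    ultimately show ?thesis by simp
  qed
  have "(\<integral>\<^sup>+ s. psi s * indicator {0..} s \<partial>lborel) \<le> (\<integral>\<^sup>+ s. liminf (\<lambda>n. H (rr n) s * indicator {0..} s) \<partial>lborel)"
    by (intro nn_integral_mono pt)
  also have "\<dots> \<le> liminf (\<lambda>n. \<integral>\<^sup>+ s. H (rr n) s * indicator {0..} s \<partial>lborel)"
    by (rule nn_integral_liminf[OF meas])
  also have "\<dots> \<le> B"
  proof (rule ennreal_le_epsilon)
    fix e :: real assume e: "0 < e"
    define c where "c = enn2real C"
    have Cc: "C = ennreal c" using Cfin by (simp add: c_def less_top)
    have c0: "c \<ge> 0" by (simp add: c_def)
    define e' where "e' = e / (c + 1)"
    have e': "e' > 0" using e c0 by (simp add: e'_def)
    have e'c: "ennreal e' * C \<le> ennreal e"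
    proof -
      have "e' * c \<le> e" using e c0 by (simp add: e'_def field_simps)
      then show ?thesis using Cc e' c0 by (simp add: ennreal_mult[symmetric] ennreal_leI)
    qed
    obtain \<delta> where d: "\<delta> > 0" "\<delta> \<le> 1"
      "\<forall>x a. 0 \<le> x \<longrightarrow> 0 \<le> a \<longrightarrow> \<bar>a - x\<bar> < \<delta> \<longrightarrow> f a \<le> f x + \<bar>a - x\<bar> * (\<bar>f' x\<bar> + e')"
      using f_bound[OF e'] by blast
    have ev: "eventually (\<lambda>n. rr n < \<delta>) sequentially"
      using rr0 d(1) by (rule order_tendstoD)
    have "eventually (\<lambda>n. (\<integral>\<^sup>+ s. H (rr n) s * indicator {0..} s \<partial>lborel) \<le> B + ennreal e) sequentially"
    proof (rule eventually_mono[OF ev])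
      fix n assume n: "rr n < \<delta>"
      have hd: "\<forall>x a. 0 \<le> x \<longrightarrow> 0 \<le> a \<longrightarrow> \<bar>a - x\<bar> < rr n \<longrightarrow> f a \<le> f x + \<bar>a - x\<bar> * (\<bar>f' x\<bar> + e')"
        using d(3) n by auto
      have "(\<integral>\<^sup>+ s. H (rr n) s * indicator {0..} s \<partial>lborel) \<le> B + ennreal e' * C"
        unfolding H_def E_def B_def C_def by (rule nbhd_integral_bound[OF e' rrpos rr1 hd])
      also have "\<dots> \<le> B + ennreal e" using e'c by (rule add_left_mono)
      finally show "(\<integral>\<^sup>+ s. H (rr n) s * indicator {0..} s \<partial>lborel) \<le> B + ennreal e" .
    qed
    then show "liminf (\<lambda>n. \<integral>\<^sup>+ s. H (rr n) s * indicator {0..} s \<partial>lborel) \<le> B + ennreal e"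
      by (intro Liminf_le) simp_all
  qed
  finally show ?thesis unfolding B_def .
qed

end



context fsetup begin

definition uu :: "real \<Rightarrow> real" where
  "uu s = enn2real (emeasure (nu_meas phi) {y\<in>{0..}. max s 0 < f y})"

lemma uu_nonneg: "uu s \<ge> 0" by (simp add: uu_def)

lemma uu_fin: "emeasure (nu_meas phi) {y\<in>{0..}. max s 0 < f y} < \<infinity>"
  by (rule N_emeasure_bounded[OF phi_nonneg phi_cont level_sub]) auto

lemma uu_emeasure: "ennreal (uu s) = emeasure (nu_meas phi) {y\<in>{0..}. max s 0 < f y}"
  using uu_fin by (simp add: uu_def less_top)

lemma uu_meas_enn: "(\<lambda>s. emeasure (nu_meas phi) {y\<in>{0..}. max s 0 < f y}) \<in> borel_measurable borel"
proof (rule antitone_ennreal_meas)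
  show "emeasure (nu_meas phi) {y\<in>{0..}. max t 0 < f y} \<le> emeasure (nu_meas phi) {y\<in>{0..}. max s 0 < f y}" if "s \<le> t" for s t
    by (intro emeasure_mono level_sets) (use that in auto)
qed (rule uu_fin)

lemma uu_meas: "uu \<in> borel_measurable borel"
proof -
  have "(\<lambda>s. enn2real (emeasure (nu_meas phi) {y\<in>{0..}. max s 0 < f y})) \<in> borel_measurable borel"
    using uu_meas_enn by measurable
  then show ?thesis by (simp add: uu_def[abs_def])
qed

lemma layer_f: "(\<integral>\<^sup>+ y. ennreal (f y) \<partial>nu_meas phi) = (\<integral>\<^sup>+ s. ennreal (uu s) * indicator {0..} s \<partial>lborel)"
proof -
  have "(\<integral>\<^sup>+ y. ennreal (f y) \<partial>nu_meas phi) = (\<integral>\<^sup>+ s. emeasure (nu_meas phi) {y\<in>{0..}. s < f y} * indicator {0..} s \<partial>lborel)"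
    by (rule layer_cake[OF phi_nonneg phi_cont f_meas f_nonneg])
  also have "\<dots> = (\<integral>\<^sup>+ s. ennreal (uu s) * indicator {0..} s \<partial>lborel)"
  proof (intro nn_integral_cong)
    fix s :: real
    show "emeasure (nu_meas phi) {y\<in>{0..}. s < f y} * indicator {0..} s = ennreal (uu s) * indicator {0..} s"
    proof (cases "s \<ge> 0")
      case True then have "max s 0 = s" by simp
      then show ?thesis using True by (simp only: uu_emeasure)
    qed simp
  qed
  finally show ?thesis .
qed

lemma lemmaA_point:
  assumes L: "concave_on {0..} L" and Lpos: "\<forall>x\<ge>0. L x \<ge> 0" and x: "x > 0"
    and hx: "ennreal x = (\<integral>\<^sup>+ s. ennreal (uu s) * indicator {0..} s \<partial>lborel)"
    and v: "v \<ge> 0"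
  shows "(\<integral>\<^sup>+ s. ennreal (uu s * L (x / uu s) / x) * indicator {0..<v} s \<partial>lborel) \<le> ennreal (L v)"
proof (cases "v = 0")
  case True then show ?thesis by simp
next
  case False
  then have v0: "v > 0" using v by simp
  have Lmono: "\<And>a b. 0 \<le> a \<Longrightarrow> a \<le> b \<Longrightarrow> L a \<le> L b" using concave_nonneg_mono[OF L Lpos] by blast
  obtain d where d: "d \<ge> 0" "\<And>y. y \<ge> 0 \<Longrightarrow> L y \<le> L v + d * (y - v)"
    using concave_support[OF L Lmono v0] by blast
  define c where "c = (L v - d * v) / x"
  have Lvd: "L v - d * v \<ge> 0"
  proof -
    have "L 0 \<le> L v + d * (0 - v)" by (rule d(2)) simp
    moreover have "L 0 \<ge> 0" using Lpos by simp
    ultimately show ?thesis by simp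
  qed
  have c0: "c \<ge> 0" using Lvd x by (simp add: c_def)
  have qle: "uu s * L (x / uu s) / x \<le> c * uu s + d" for s
  proof (cases "uu s = 0")
    case True then show ?thesis using d by simp
  next
    case False
    then have us: "uu s > 0" using uu_nonneg[of s] by simp
    have "L (x / uu s) \<le> L v + d * (x / uu s - v)" using d(2)[of "x / uu s"] x us by simp
    then have "uu s * L (x / uu s) \<le> uu s * (L v + d * (x / uu s - v))" using us by (intro mult_left_mono) auto
    also have "\<dots> = uu s * (L v - d * v) + d * x" using us by (simp add: field_simps)
    finally have "uu s * L (x / uu s) / x \<le> (uu s * (L v - d * v) + d * x) / x"
      using x by (intro divide_right_mono) auto
    also have "\<dots> = c * uu s + d" using x by (simp add: c_def field_simps)
    finally show ?thesis .
  qed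
  have "(\<integral>\<^sup>+ s. ennreal (uu s * L (x / uu s) / x) * indicator {0..<v} s \<partial>lborel)
      \<le> (\<integral>\<^sup>+ s. (ennreal c * ennreal (uu s) * indicator {0..<v} s + ennreal d * indicator {0..<v} s) \<partial>lborel)"
  proof (intro nn_integral_mono)
    fix s
    have "ennreal (uu s * L (x / uu s) / x) \<le> ennreal (c * uu s + d)" by (intro ennreal_leI qle)
    also have "\<dots> = ennreal c * ennreal (uu s) + ennreal d" using c0 d uu_nonneg[of s]
      by (simp add: ennreal_mult ennreal_plus)
    finally show "ennreal (uu s * L (x / uu s) / x) * indicator {0..<v} s \<le> ennreal c * ennreal (uu s) * indicator {0..<v} s + ennreal d * indicator {0..<v} s"
      by (auto simp: indicator_def)
  qed
  also have "\<dots> = ennreal c * (\<integral>\<^sup>+ s. ennreal (uu s) * indicator {0..<v} s \<partial>lborel) + ennreal d * ennreal v"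
  proof -
    have [measurable]: "uu \<in> borel_measurable borel" by (rule uu_meas)
    show ?thesis using v
      by (simp add: nn_integral_add nn_integral_cmult mult.assoc nn_integral_cmult_indicator)
  qed
  also have "\<dots> \<le> ennreal c * ennreal x + ennreal d * ennreal v"
  proof -
    have "(\<integral>\<^sup>+ s. ennreal (uu s) * indicator {0..<v} s \<partial>lborel) \<le> (\<integral>\<^sup>+ s. ennreal (uu s) * indicator {0..} s \<partial>lborel)"
      by (intro nn_integral_mono) (auto simp: indicator_def)
    then show ?thesis unfolding hx[symmetric] by (intro add_right_mono mult_left_mono) auto
  qed
  also have "\<dots> = ennreal (L v)"
    using x c0 d v Lvd by (simp add: ennreal_mult[symmetric] ennreal_plus[symmetric] c_def del: ennreal_plus)
  finally show ?thesis .
qed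

lemma lemmaA:
  assumes L: "concave_on {0..} L" and Lpos: "\<forall>x\<ge>0. L x \<ge> 0" and x: "x > 0"
    and hx: "ennreal x = (\<integral>\<^sup>+ s. ennreal (uu s) * indicator {0..} s \<partial>lborel)"
  shows "(\<integral>\<^sup>+ s. ennreal (uu s / x * (uu s * L (x / uu s))) * indicator {0..} s \<partial>lborel)
     \<le> (\<integral>\<^sup>+ y. ennreal (L (f y)) \<partial>nu_meas phi)"
proof -
  let ?N = "nu_meas phi"
  interpret N: sigma_finite_measure ?N by (rule N_sigma_finite[OF phi_nonneg phi_cont])
  interpret P: pair_sigma_finite ?N lborel by unfold_locales
  define q where "q s = uu s * L (x / uu s) / x" for s
  have um[measurable]: "uu \<in> borel_measurable borel" by (rule uu_meas)
  have qpos: "q s \<ge> 0" for s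
    using uu_nonneg[of s] x Lpos by (auto simp: q_def intro!: divide_nonneg_pos mult_nonneg_nonneg)
  have Lm: "(\<lambda>s. L (x / uu s)) \<in> borel_measurable borel"
    by (rule concave_meas[OF L]) (use x uu_nonneg in auto)
  have qm[measurable]: "q \<in> borel_measurable borel" unfolding q_def[abs_def] using Lm by measurable
  have fm[measurable]: "f \<in> borel_measurable ?N" by (rule f_meas)
  define F where "F = (\<lambda>y s::real. ennreal (q s) * indicator {p::real\<times>real. 0 \<le> snd p \<and> snd p < f (fst p)} (y, s))"
  have Fm: "case_prod F \<in> borel_measurable (?N \<Otimes>\<^sub>M lborel)"
  proof -
    have "{p \<in> space (?N \<Otimes>\<^sub>M lborel). 0 \<le> snd p \<and> snd p < f (fst p)} \<in> sets (?N \<Otimes>\<^sub>M lborel)"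
      by measurable
    then have S: "{p::real\<times>real. 0 \<le> snd p \<and> snd p < f (fst p)} \<inter> space (?N \<Otimes>\<^sub>M lborel) \<in> sets (?N \<Otimes>\<^sub>M lborel)"
      by (simp add: Int_def conj_commute)
    have "(\<lambda>p. indicator {p::real\<times>real. 0 \<le> snd p \<and> snd p < f (fst p)} p :: ennreal) \<in> borel_measurable (?N \<Otimes>\<^sub>M lborel)"
      using S by (simp add: borel_measurable_indicator')
    moreover have "(\<lambda>p::real\<times>real. ennreal (q (snd p))) \<in> borel_measurable (?N \<Otimes>\<^sub>M lborel)" by measurable
    ultimately show ?thesis unfolding F_def by (simp add: case_prod_beta')
  qed
  have "(\<integral>\<^sup>+ s. ennreal (uu s / x * (uu s * L (x / uu s))) * indicator {0..} s \<partial>lborel)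
      = (\<integral>\<^sup>+ s. (\<integral>\<^sup>+ y. F y s \<partial>?N) \<partial>lborel)"
  proof (rule nn_integral_cong)
    fix s :: real
    show "ennreal (uu s / x * (uu s * L (x / uu s))) * indicator {0..} s = (\<integral>\<^sup>+ y. F y s \<partial>?N)"
    proof (cases "s \<ge> 0")
      case True
      then have ms: "max s 0 = s" by simp
      have "(\<integral>\<^sup>+ y. F y s \<partial>?N) = (\<integral>\<^sup>+ y. ennreal (q s) * indicator {y\<in>{0..}. s < f y} y \<partial>?N)"
        by (rule nn_integral_cong) (use True in \<open>auto simp: F_def indicator_def\<close>)
      also have "\<dots> = ennreal (q s) * emeasure ?N {y\<in>{0..}. s < f y}"
        by (rule nn_integral_cmult_indicator[OF level_sets])
      also have "\<dots> = ennreal (q s) * ennreal (uu s)" using uu_emeasure[of s] ms by simp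
      also have "\<dots> = ennreal (uu s / x * (uu s * L (x / uu s)))"
        using qpos[of s] uu_nonneg[of s] by (simp add: ennreal_mult[symmetric] q_def field_simps)
      finally show ?thesis using True by simp
    next
      case False
      then show ?thesis by (simp add: F_def)
    qed
  qed
  also have "\<dots> = (\<integral>\<^sup>+ y. (\<integral>\<^sup>+ s. F y s \<partial>lborel) \<partial>?N)"
    by (rule P.Fubini'[OF Fm])
  also have "\<dots> \<le> (\<integral>\<^sup>+ y. ennreal (L (f y)) \<partial>?N)"
  proof (rule nn_integral_mono)
    fix y assume "y \<in> space ?N"
    then have y: "y \<ge> 0" by simp
    have "(\<integral>\<^sup>+ s. F y s \<partial>lborel) = (\<integral>\<^sup>+ s. ennreal (uu s * L (x / uu s) / x) * indicator {0..<f y} s \<partial>lborel)"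
      by (rule nn_integral_cong) (auto simp: F_def q_def indicator_def)
    also have "\<dots> \<le> ennreal (L (f y))"
      by (rule lemmaA_point[OF L Lpos x hx]) (use f_nonneg y in auto)
    finally show "(\<integral>\<^sup>+ s. F y s \<partial>lborel) \<le> ennreal (L (f y))" .
  qed
  finally show ?thesis .
qed

lemma assemble:
  assumes x: "x > 0" and hx: "ennreal x = (\<integral>\<^sup>+ s. ennreal (uu s) * indicator {0..} s \<partial>lborel)"
    and bm: "\<beta> \<in> borel_measurable borel" and A: "A \<ge> 0"
    and core: "\<And>s. s \<ge> 0 \<Longrightarrow> uu s > 0 \<Longrightarrow> ennreal (uu s / x * A) \<le> nu_plus (nu_meas phi) {y\<in>{0..}. s < f y} + ennreal (\<beta> s)"
  shows "ennreal A \<le> (\<integral>\<^sup>+ y. ennreal \<bar>f' y\<bar> \<partial>nu_meas phi) + (\<integral>\<^sup>+ s. ennreal (\<beta> s) * indicator {0..} s \<partial>lborel)"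
proof -
  have um[measurable]: "uu \<in> borel_measurable borel" by (rule uu_meas)
  note bm[measurable]
  have [measurable]: "{0::real..} \<in> sets borel" by simp
  define \<phi> where "\<phi> s = ennreal (uu s / x * A) - ennreal (\<beta> s)" for s
  have phim[measurable]: "\<phi> \<in> borel_measurable borel" unfolding \<phi>_def[abs_def] by measurable
  have phile: "\<phi> s \<le> nu_plus (nu_meas phi) {y\<in>{0..}. s < f y}" if s: "s \<ge> 0" for s
  proof (cases "uu s > 0")
    case True
    have "ennreal (uu s / x * A) \<le> ennreal (\<beta> s) + nu_plus (nu_meas phi) {y\<in>{0..}. s < f y}"
      using core[OF s True] by (simp add: add.commute)
    then show ?thesis unfolding \<phi>_def by (subst ennreal_minus_le_iff) auto
  next
    case False
    then have "uu s = 0" using uu_nonneg[of s] by simp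
    then show ?thesis by (simp add: \<phi>_def)
  qed
  have "ennreal A = (\<integral>\<^sup>+ s. ennreal (A / x) * (ennreal (uu s) * indicator {0..} s) \<partial>lborel)"
  proof -
    have "(\<integral>\<^sup>+ s. ennreal (A / x) * (ennreal (uu s) * indicator {0..} s) \<partial>lborel) = ennreal (A / x) * ennreal x"
      unfolding hx by (rule nn_integral_cmult) measurable
    also have "\<dots> = ennreal A" using x A by (simp add: ennreal_mult[symmetric])
    finally show ?thesis by simp
  qed
  also have "\<dots> \<le> (\<integral>\<^sup>+ s. (\<phi> s * indicator {0..} s + ennreal (\<beta> s) * indicator {0..} s) \<partial>lborel)"
  proof (rule nn_integral_mono)
    fix s
    have "ennreal (uu s / x * A) \<le> ennreal (\<beta> s) + \<phi> s"
      unfolding \<phi>_def using ennreal_minus_le_iff[of "ennreal (uu s / x * A)" "ennreal (\<beta> s)" "ennreal (uu s / x * A) - ennreal (\<beta> s)"] by simp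
    moreover have "ennreal (A / x) * ennreal (uu s) = ennreal (uu s / x * A)"
      using x A uu_nonneg[of s] by (simp add: ennreal_mult[symmetric])
    ultimately show "ennreal (A / x) * (ennreal (uu s) * indicator {0..} s) \<le> \<phi> s * indicator {0..} s + ennreal (\<beta> s) * indicator {0..} s"
      by (auto simp: indicator_def mult.assoc[symmetric] add.commute)
  qed
  also have "\<dots> = (\<integral>\<^sup>+ s. \<phi> s * indicator {0..} s \<partial>lborel) + (\<integral>\<^sup>+ s. ennreal (\<beta> s) * indicator {0..} s \<partial>lborel)"
    by (rule nn_integral_add) measurable
  also have "\<dots> \<le> (\<integral>\<^sup>+ y. ennreal \<bar>f' y\<bar> \<partial>nu_meas phi) + (\<integral>\<^sup>+ s. ennreal (\<beta> s) * indicator {0..} s \<partial>lborel)"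
    by (intro add_right_mono boundary_fatou phim phile)
  finally show ?thesis .
qed

end



lemma final_conv:
  fixes I b k :: real and Kx :: ereal
  assumes "I \<le> b + k" "b \<ge> 0" "ereal k \<le> Kx"
  shows "ereal I \<le> Kx + ereal b"
proof -
  have "ereal I \<le> ereal k + ereal b" using assms(1) by simp
  also have "\<dots> \<le> Kx + ereal b" using assms(3) by (rule add_right_mono)
  finally show ?thesis .
qed

lemma enn_le3:
  fixes a b c :: real
  assumes "ennreal a \<le> ennreal b + ennreal c" "b \<ge> 0" "c \<ge> 0"
  shows "a \<le> b + c"
  using assms by (simp add: ennreal_plus[symmetric] ennreal_le_iff del: ennreal_plus)

context fsetup begin

lemma fin_int_f': "(\<integral>\<^sup>+ y. ennreal \<bar>f' y\<bar> \<partial>nu_meas phi) < \<infinity>"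
proof -
  obtain M where M: "\<And>x. x \<in> {0..R} \<Longrightarrow> norm (f' x) \<le> M"
    using compact_imp_bounded[OF compact_continuous_image[OF continuous_on_subset[OF f'_cont] compact_Icc, of 0 R]]
    unfolding bounded_iff by fastforce
  have "(\<integral>\<^sup>+ y. ennreal \<bar>f' y\<bar> \<partial>nu_meas phi) \<le> (\<integral>\<^sup>+ y. ennreal M * indicator {0..R} y \<partial>nu_meas phi)"
  proof (rule nn_integral_mono)
    fix y assume "y \<in> space (nu_meas phi)"
    then have y: "y \<ge> 0" by simp
    show "ennreal \<bar>f' y\<bar> \<le> ennreal M * indicator {0..R} y"
    proof (cases "y \<le> R")
      case True then show ?thesis using M[of y] y by (auto intro!: ennreal_leI)
    next
      case False then show ?thesis using f'_zero[of y] by auto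
    qed
  qed
  also have "\<dots> = ennreal M * emeasure (nu_meas phi) {0..R}"
    by (rule nn_integral_cmult_indicator) (simp add: N_sets_iff)
  also have "\<dots> < \<infinity>" using N_emeasure_bounded[OF phi_nonneg phi_cont, of "{0..R}" R]
    by (simp add: ennreal_mult_less_top)
  finally show ?thesis .
qed

end




theorem theorem2p1:
  fixes phi I J K L f f' :: "real \<Rightarrow> real"
  assumes phi_nonneg: "\<forall>x\<ge>0. phi x \<ge> 0"
    and phi_cont: "continuous_on {0..} phi"
    and I_nonneg: "\<forall>x\<ge>0. I x \<ge> 0"
    and J_nonneg: "\<forall>x\<ge>0. J x \<ge> 0"
    and K_nonneg: "\<forall>x\<ge>0. K x \<ge> 0"
    and L_nonneg: "\<forall>x\<ge>0. L x \<ge> 0"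
    and cond_i: "\<forall>a\<ge>0. \<forall>b\<ge>0. I (a * b) \<le> b * J a + K (a * L b)"
    and cond_ii: "lower_isoperimetric (nu_meas phi) J"
    and cond_iii: "mono_on {0..} K" "concave_on {0..} K"
    and cond_iv: "concave_on {0..} L"
    and f_nonneg: "\<forall>x\<ge>0. f x \<ge> 0"
    and f_deriv: "\<forall>x\<ge>0. (f has_real_derivative f' x) (at x within {0..})"
    and f'_cont: "continuous_on {0..} f'"
    and f_bdd_supp: "\<exists>R. \<forall>x\<ge>R. f x = 0"
  shows "ereal (I (integral\<^sup>L (nu_meas phi) f))
           \<le> K_ext K (\<integral>\<^sup>+ x. ennreal (L (f x)) \<partial>(nu_meas phi))
              + ereal (integral\<^sup>L (nu_meas phi) (\<lambda>x. \<bar>f' x\<bar>))"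
proof -
  obtain R0 where R0: "\<forall>x\<ge>R0. f x = 0" using f_bdd_supp by blast
  define R where "R = max R0 1"
  have R: "R > 0" by (simp add: R_def)
  have fR: "\<forall>x\<ge>R. f x = 0" using R0 by (simp add: R_def)
  interpret fsetup phi f f' R
    by unfold_locales (use phi_nonneg phi_cont f_nonneg f_deriv f'_cont R fR in auto)
  let ?N = "nu_meas phi"
  define x where "x = integral\<^sup>L ?N f"
  define B where "B = (\<integral>\<^sup>+ y. ennreal \<bar>f' y\<bar> \<partial>?N)"
  define Sn where "Sn = (\<integral>\<^sup>+ y. ennreal (L (f y)) \<partial>?N)"
  have Bfin: "B < \<infinity>" unfolding B_def by (rule fin_int_f')
  have x_eq: "x = enn2real (\<integral>\<^sup>+ y. ennreal (f y) \<partial>?N)"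
    unfolding x_def
  proof (rule integral_eq_nn_integral[OF f_meas])
    show "AE y in ?N. 0 \<le> f y" using f_nonneg by (intro AE_I2) simp
  qed
  have hx0: "ennreal x = (\<integral>\<^sup>+ y. ennreal (f y) \<partial>?N)"
    using fin_int_f unfolding x_eq by (simp add: less_top)
  have hx: "ennreal x = (\<integral>\<^sup>+ s. ennreal (uu s) * indicator {0..} s \<partial>lborel)"
    using hx0 layer_f by simp
  have x0: "x \<ge> 0" by (simp add: x_eq)
  have b_eq: "integral\<^sup>L ?N (\<lambda>y. \<bar>f' y\<bar>) = enn2real B"
    unfolding B_def
  proof (rule integral_eq_nn_integral)
    show "(\<lambda>y. \<bar>f' y\<bar>) \<in> borel_measurable ?N" using f'_meas by measurable
    show "AE y in ?N. 0 \<le> \<bar>f' y\<bar>" by (intro AE_I2) simp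
  qed
  have b0: "enn2real B \<ge> 0" by simp
  have hB: "B = ennreal (enn2real B)" using Bfin by (simp add: less_top)
  have Kmono: "\<And>a b. 0 \<le> a \<Longrightarrow> a \<le> b \<Longrightarrow> K a \<le> K b"
    using cond_iii(1) by (auto simp: mono_on_def)
  have K0: "K 0 \<ge> 0" using K_nonneg by simp
  have Kext_ge0: "ereal (K 0) \<le> K_ext K Sn"
  proof (cases "Sn = \<infinity>")
    case True
    have "ereal (K 0) \<le> (SUP t\<in>{0::real..}. ereal (K t))" by (rule SUP_upper) simp
    then show ?thesis using True by (simp add: K_ext_def)
  next
    case False
    then show ?thesis by (simp add: K_ext_def Kmono)
  qed
  show ?thesis
  proof (cases "x = 0")
    case True
    have "I x \<le> K 0"
      using cond_i[rule_format, of 0 0] True by simp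
    then have "I x \<le> enn2real B + K 0" using b0 by linarith
    from final_conv[OF this b0 Kext_ge0] show ?thesis
      unfolding x_def Sn_def b_eq .
  next
    case False
    then have xpos: "x > 0" using x0 by simp
    have um[measurable]: "uu \<in> borel_measurable borel" by (rule uu_meas)
    define G where "G s = uu s * L (x / uu s)" for s
    have Gpos: "G s \<ge> 0" for s using uu_nonneg[of s] L_nonneg xpos by (simp add: G_def)
    have Lm: "(\<lambda>s. L (x / uu s)) \<in> borel_measurable borel"
      by (rule concave_meas[OF cond_iv]) (use xpos uu_nonneg in auto)
    have Gm[measurable]: "G \<in> borel_measurable borel" unfolding G_def[abs_def] using Lm by measurable
    have [measurable]: "{0::real..} \<in> sets borel" by simp
    have core0: "I x \<le> (x / uu s) * J (uu s) + K (G s)" if s: "s \<ge> 0" "uu s > 0" for s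
    proof -
      have "I (uu s * (x / uu s)) \<le> (x / uu s) * J (uu s) + K (uu s * L (x / uu s))"
        by (rule cond_i[rule_format]) (use uu_nonneg[of s] xpos s in auto)
      then show ?thesis using s by (simp add: G_def)
    qed
    have Jb: "ennreal (J (uu s)) \<le> nu_plus ?N {y\<in>{0..}. s < f y}" if s: "s \<ge> 0" for s
    proof -
      have ms: "max s 0 = s" using s by simp
      have E: "{y\<in>{0..}. s < f y} \<in> sets borel" "{y\<in>{0..}. s < f y} \<subseteq> {0..}"
        using level_sets[of s] by (auto simp: N_sets_iff)
      have fin: "emeasure ?N {y\<in>{0..}. s < f y} < \<infinity>" using uu_fin[of s] ms by simp
      have "uu s = enn2real (emeasure ?N {y\<in>{0..}. s < f y})" using ms by (simp add: uu_def)
      then show ?thesis using cond_ii E fin unfolding lower_isoperimetric_def by auto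
    qed
    have core: "ennreal (uu s / x * A) \<le> nu_plus ?N {y\<in>{0..}. s < f y} + ennreal (uu s / x * C)"
      if s: "s \<ge> 0" "uu s > 0" and C: "C \<ge> 0" and hA: "A \<le> (x / uu s) * J (uu s) + C" for s A C
    proof -
      have "uu s / x * A \<le> uu s / x * ((x / uu s) * J (uu s) + C)"
        using s xpos hA by (intro mult_left_mono) auto
      also have "\<dots> = J (uu s) + uu s / x * C" using s xpos by (simp add: field_simps)
      finally have "ennreal (uu s / x * A) \<le> ennreal (J (uu s) + uu s / x * C)" by (rule ennreal_leI)
      also have "\<dots> = ennreal (J (uu s)) + ennreal (uu s / x * C)"
        using J_nonneg uu_nonneg[of s] xpos C by (intro ennreal_plus) auto
      also have "\<dots> \<le> nu_plus ?N {y\<in>{0..}. s < f y} + ennreal (uu s / x * C)"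
        by (intro add_right_mono Jb s)
      finally show ?thesis .
    qed
    have Ix0: "I x \<ge> 0" using I_nonneg x0 by simp
    have intw: "(\<integral>\<^sup>+ s. ennreal (uu s / x * c) * indicator {0..} s \<partial>lborel) = ennreal c" if c: "c \<ge> 0" for c
    proof -
      have "(\<integral>\<^sup>+ s. ennreal (uu s / x * c) * indicator {0..} s \<partial>lborel)
          = (\<integral>\<^sup>+ s. ennreal (c / x) * (ennreal (uu s) * indicator {0..} s) \<partial>lborel)"
        by (rule nn_integral_cong) (use xpos c uu_nonneg in \<open>simp add: ennreal_mult[symmetric] mult.assoc[symmetric] mult.commute\<close>)
      also have "\<dots> = ennreal (c / x) * ennreal x" unfolding hx by (rule nn_integral_cmult) measurable
      also have "\<dots> = ennreal c" using xpos c by (simp add: ennreal_mult[symmetric])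
      finally show ?thesis .
    qed
    have fin_goal: "ereal (I x) \<le> K_ext K Sn + ereal (enn2real B)"
    proof (cases "Sn = \<infinity>")
      case Sinf: True
      define Ks where "Ks = (SUP t\<in>{0::real..}. ereal (K t))"
      have KsK: "ereal (K t) \<le> Ks" if "t \<ge> 0" for t unfolding Ks_def by (rule SUP_upper) (use that in simp)
      have Kext: "K_ext K Sn = Ks" using Sinf by (simp add: K_ext_def Ks_def)
      show ?thesis
      proof (cases "Ks = \<infinity>")
        case True then show ?thesis using Kext by simp
      next
        case False
        have "Ks \<ge> ereal (K 0)" using KsK[of 0] by simp
        then obtain k where k: "Ks = ereal k" using False by (cases Ks) auto
        have Kk: "K t \<le> k" if "t \<ge> 0" for t using KsK[OF that] k by simp
        have k0: "k \<ge> 0" using Kk[of 0] K0 by simp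
        have "ennreal (I x) \<le> B + (\<integral>\<^sup>+ s. ennreal (uu s / x * k) * indicator {0..} s \<partial>lborel)"
          unfolding B_def
        proof (rule assemble[OF xpos hx _ Ix0])
          show "(\<lambda>s. uu s / x * k) \<in> borel_measurable borel" by measurable
          fix s :: real assume s: "s \<ge> 0" "uu s > 0"
          show "ennreal (uu s / x * I x) \<le> nu_plus ?N {y\<in>{0..}. s < f y} + ennreal (uu s / x * k)"
          proof (rule core[OF s k0])
            show "I x \<le> x / uu s * J (uu s) + k" using core0[OF s] Kk[OF Gpos[of s]] by simp
          qed
        qed
        also have "\<dots> = ennreal (enn2real B) + ennreal k" using intw[OF k0] hB by simp
        finally have "I x \<le> enn2real B + k" by (rule enn_le3) (use k0 in simp_all)
        moreover have "ereal k \<le> K_ext K Sn" using Kext k by simp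
        ultimately show ?thesis using final_conv b0 by blast
      qed
    next
      case Sfin: False
      define S where "S = enn2real Sn"
      have SnS: "Sn = ennreal S" using Sfin by (simp add: S_def less_top)
      have S0: "S \<ge> 0" by (simp add: S_def)
      have Kext: "K_ext K Sn = ereal (K S)" using Sfin by (simp add: K_ext_def S_def)
      have lemA: "(\<integral>\<^sup>+ s. ennreal (uu s / x * G s) * indicator {0..} s \<partial>lborel) \<le> ennreal S"
        unfolding G_def SnS[symmetric] Sn_def by (rule lemmaA[OF cond_iv L_nonneg xpos hx])
      show ?thesis
      proof (cases "S > 0")
        case True
        obtain d where d: "d \<ge> 0" "\<And>y. y \<ge> 0 \<Longrightarrow> K y \<le> K S + d * (y - S)"
          using concave_support[OF cond_iii(2) Kmono True] by blast
        have KS: "K S \<ge> 0" using K_nonneg S0 by simp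
        define \<beta> where "\<beta> s = uu s / x * (K S + d * G s)" for s
        have bm: "\<beta> \<in> borel_measurable borel" unfolding \<beta>_def[abs_def] by measurable
        have A0: "I x + d * S \<ge> 0" using Ix0 d S0 by simp
        have "ennreal (I x + d * S) \<le> B + (\<integral>\<^sup>+ s. ennreal (\<beta> s) * indicator {0..} s \<partial>lborel)"
          unfolding B_def
        proof (rule assemble[OF xpos hx bm A0])
          fix s :: real assume s: "s \<ge> 0" "uu s > 0"
          have C0: "K S + d * G s \<ge> 0" using KS d Gpos[of s] by simp
          show "ennreal (uu s / x * (I x + d * S)) \<le> nu_plus ?N {y\<in>{0..}. s < f y} + ennreal (\<beta> s)"
            unfolding \<beta>_def
          proof (rule core[OF s C0])
            show "I x + d * S \<le> x / uu s * J (uu s) + (K S + d * G s)"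
              using core0[OF s] d(2)[OF Gpos[of s]] by (simp add: algebra_simps)
          qed
        qed
        also have "(\<integral>\<^sup>+ s. ennreal (\<beta> s) * indicator {0..} s \<partial>lborel)
            = (\<integral>\<^sup>+ s. ennreal (uu s / x * K S) * indicator {0..} s + ennreal d * (ennreal (uu s / x * G s) * indicator {0..} s) \<partial>lborel)"
        proof (rule nn_integral_cong)
          fix s :: real
          have "ennreal (\<beta> s) = ennreal (uu s / x * K S) + ennreal d * ennreal (uu s / x * G s)"
            using xpos uu_nonneg[of s] KS d Gpos[of s]
            by (simp add: \<beta>_def ennreal_mult[symmetric] ennreal_plus[symmetric] algebra_simps del: ennreal_plus)
          then show "ennreal (\<beta> s) * indicator {0..} s = ennreal (uu s / x * K S) * indicator {0..} s + ennreal d * (ennreal (uu s / x * G s) * indicator {0..} s)"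
            by (simp add: distrib_right mult.assoc)
        qed
        also have "\<dots> = ennreal (K S) + ennreal d * (\<integral>\<^sup>+ s. ennreal (uu s / x * G s) * indicator {0..} s \<partial>lborel)"
          using intw[OF KS] by (simp add: nn_integral_add nn_integral_cmult)
        also have "\<dots> \<le> ennreal (K S) + ennreal d * ennreal S"
          by (intro add_left_mono mult_left_mono lemA) simp
        finally have "ennreal (I x + d * S) \<le> ennreal (enn2real B) + ennreal (K S) + ennreal (d * S)"
          using hB d S0 by (simp add: ennreal_mult add.assoc)
        then have "I x + d * S \<le> enn2real B + K S + d * S"
          using KS d S0 by (simp add: ennreal_plus[symmetric] ennreal_le_iff del: ennreal_plus)
        then have "I x \<le> enn2real B + K S" by simp
        moreover have "ereal (K S) \<le> K_ext K Sn" using Kext by simp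
        ultimately show ?thesis using final_conv b0 by blast
      next
        case False
        then have S00: "S = 0" using S0 by simp
        define \<beta> where "\<beta> s = uu s / x * K (G s)" for s
        have KGm: "(\<lambda>s. K (G s)) \<in> borel_measurable borel"
          by (rule concave_meas[OF cond_iii(2) Gm]) (use Gpos in auto)
        have bm: "\<beta> \<in> borel_measurable borel" unfolding \<beta>_def[abs_def] using KGm by measurable
        have "ennreal (I x) \<le> B + (\<integral>\<^sup>+ s. ennreal (\<beta> s) * indicator {0..} s \<partial>lborel)"
          unfolding B_def
        proof (rule assemble[OF xpos hx bm Ix0])
          fix s :: real assume s: "s \<ge> 0" "uu s > 0"
          have C0: "K (G s) \<ge> 0" using K_nonneg Gpos[of s] by simp
          show "ennreal (uu s / x * I x) \<le> nu_plus ?N {y\<in>{0..}. s < f y} + ennreal (\<beta> s)"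
            unfolding \<beta>_def by (rule core[OF s C0 core0[OF s]])
        qed
        also have "(\<integral>\<^sup>+ s. ennreal (\<beta> s) * indicator {0..} s \<partial>lborel)
            \<le> (\<integral>\<^sup>+ s. ennreal (uu s / x * K 0) * indicator {0..} s + \<infinity> * (ennreal (uu s / x * G s) * indicator {0..} s) \<partial>lborel)"
        proof (rule nn_integral_mono)
          fix s :: real
          show "ennreal (\<beta> s) * indicator {0..} s \<le> ennreal (uu s / x * K 0) * indicator {0..} s + \<infinity> * (ennreal (uu s / x * G s) * indicator {0..} s)"
          proof (cases "s \<ge> 0 \<and> uu s / x * G s > 0")
            case True
            then have "ennreal (uu s / x * G s) * indicator {0..} s \<noteq> 0" by (auto simp: indicator_def)
            then have "\<infinity> * (ennreal (uu s / x * G s) * indicator {0..} s) = \<infinity>"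
              unfolding infinity_ennreal_def by (rule ennreal_top_mult_right)
            then show ?thesis by (simp only:) simp
          next
            case False
            show ?thesis
            proof (cases "s \<ge> 0")
              case s: True
              then have "uu s / x * G s = 0" using False xpos uu_nonneg[of s] Gpos[of s] by force
              then have "uu s = 0 \<or> G s = 0" using xpos by simp
              then have "\<beta> s = uu s / x * K 0" by (auto simp: \<beta>_def)
              then show ?thesis using s by simp
            qed simp
          qed
        qed
        also have "\<dots> = ennreal (K 0) + \<infinity> * (\<integral>\<^sup>+ s. ennreal (uu s / x * G s) * indicator {0..} s \<partial>lborel)"
          using intw[OF K0] by (simp add: nn_integral_add nn_integral_cmult)
        also have "(\<integral>\<^sup>+ s. ennreal (uu s / x * G s) * indicator {0..} s \<partial>lborel) = 0"
          using lemA S00 by simp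
        finally have "ennreal (I x) \<le> ennreal (enn2real B) + ennreal (K 0)" using hB by simp
        then have "I x \<le> enn2real B + K 0" by (rule enn_le3) (use K0 in simp_all)
        moreover have "ereal (K 0) \<le> K_ext K Sn" using Kext S00 by simp
        ultimately show ?thesis using final_conv b0 by blast
      qed
    qed
    show ?thesis using fin_goal unfolding x_def Sn_def b_eq .
  qed
qed


end
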